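(* Let $s\ge2$, let $(g_{\mu\nu})$ be a real symmetric invertible $(s+1)\times(s+1)$ matrix with inverse $(g^{\mu\nu})$, and let $\mathcal{A}=\bigoplus_n\mathcal{A}_n$ be the graded unital associative $\mathbb{C}$-algebra generated by $\nabla_0,\dots,\nabla_s$ in degree $1$ with relations $\sum_{\lambda,\mu}g^{\lambda\mu}[\nabla_\lambda,[\nabla_\mu,\nabla_\nu]]=0$ for $\nu=0,\dots,s$. Then $\mathcal{A}$ has exponential growth, i.e. $\dim\mathcal{A}_n$ grows exponentially in $n$. *)

theory Defs
  imports Complex_Main "HOL-Library.Function_Algebras"
begin

text \<open>Noncommutative polynomials in the letters 0..s are functions from words
(nat lists) to complex coefficients. Multiplication is concatenation product.\<close>

type_synonym ncpoly = "nat list \<Rightarrow> complex"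

definition ncmul :: "ncpoly \<Rightarrow> ncpoly \<Rightarrow> ncpoly" where
  "ncmul p q = (\<lambda>w. \<Sum>i\<le>length w. p (take i w) * q (drop i w))"

definition ncmono :: "nat list \<Rightarrow> ncpoly" where
  "ncmono u = (\<lambda>w. if w = u then 1 else 0)"

definition nccomm :: "ncpoly \<Rightarrow> ncpoly \<Rightarrow> ncpoly" where
  "nccomm a b = ncmul a b - ncmul b a"

definition cscale :: "complex \<Rightarrow> ncpoly \<Rightarrow> ncpoly" where
  "cscale c f = (\<lambda>w. c * f w)"

definition free_alg :: "nat \<Rightarrow> ncpoly set" where
  "free_alg s = {f. finite {w. f w \<noteq> 0} \<and> (\<forall>w. f w \<noteq> 0 \<longrightarrow> set w \<subseteq> {0..s})}"

definition free_deg :: "nat \<Rightarrow> nat \<Rightarrow> ncpoly set" where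
  "free_deg s n = {f. \<forall>w. f w \<noteq> 0 \<longrightarrow> length w = n \<and> set w \<subseteq> {0..s}}"

definition ym_rel :: "nat \<Rightarrow> (nat \<Rightarrow> nat \<Rightarrow> real) \<Rightarrow> nat \<Rightarrow> ncpoly" where
  "ym_rel s ginv \<nu> = (\<Sum>la\<le>s. \<Sum>\<mu>\<le>s. cscale (complex_of_real (ginv la \<mu>))
      (nccomm (ncmono [la]) (nccomm (ncmono [\<mu>]) (ncmono [\<nu>]))))"

definition ym_ideal :: "nat \<Rightarrow> (nat \<Rightarrow> nat \<Rightarrow> real) \<Rightarrow> ncpoly set" where
  "ym_ideal s ginv = module.span cscale
     {ncmul (ncmul p (ym_rel s ginv \<nu>)) q | p q \<nu>. p \<in> free_alg s \<and> q \<in> free_alg s \<and> \<nu> \<le> s}"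

text \<open>dim A_n = dim (free degree n part) - dim (ideal intersected with it),
i.e. the dimension of the quotient (free_deg n)/(I \<inter> free_deg n).\<close>
definition ym_dim :: "nat \<Rightarrow> (nat \<Rightarrow> nat \<Rightarrow> real) \<Rightarrow> nat \<Rightarrow> nat" where
  "ym_dim s ginv n = vector_space.dim cscale (free_deg s n)
      - vector_space.dim cscale (ym_ideal s ginv \<inter> free_deg s n)"

end

theory Submission
  imports Defs
begin
interpretation V: vector_space cscale
  by unfold_locales (auto simp: cscale_def fun_eq_iff algebra_simps)

definition Wd :: "nat \<Rightarrow> nat \<Rightarrow> nat list set" where
  "Wd s n = {w. set w \<subseteq> {0..s} \<and> length w = n}"

definition MM :: "(nat \<Rightarrow> complex) \<Rightarrow> (nat \<Rightarrow> complex) \<Rightarrow> nat \<Rightarrow> nat \<Rightarrow> complex" where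
  "MM a b i c = (if c = 0 then a i else if c = 1 then b i else 0)"

definition PP :: "(nat \<Rightarrow> nat \<Rightarrow> complex) \<Rightarrow> nat list \<Rightarrow> nat list \<Rightarrow> complex" where
  "PP M w u = prod_list (map2 M w u)"

definition Phi :: "nat \<Rightarrow> (nat \<Rightarrow> nat \<Rightarrow> complex) \<Rightarrow> ncpoly \<Rightarrow> ncpoly" where
  "Phi s M f = (\<lambda>u. \<Sum>w\<in>Wd s (length u). f w * PP M w u)"

lemma finite_Wd[simp]: "finite (Wd s n)"
  unfolding Wd_def by (rule finite_lists_length_eq) simp

lemma split_sum:
  assumes "i \<le> n"
  shows "(\<Sum>w\<in>Wd s n. h w) = (\<Sum>(x,y)\<in>Wd s i \<times> Wd s (n-i). h (x@y))"
  by (rule sum.reindex_bij_witness[where i="\<lambda>(x,y). x@y" and j="\<lambda>w. (take i w, drop i w)"])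
     (use assms in \<open>auto simp: Wd_def dest: in_set_takeD in_set_dropD\<close>)

lemma PP_append:
  assumes "length x = i" "i \<le> length u"
  shows "PP M (x@y) u = PP M x (take i u) * PP M y (drop i u)"
proof -
  have "u = take i u @ drop i u" by simp
  then have "zip (x@y) u = zip x (take i u) @ zip y (drop i u)"
    using assms by (metis length_take min.absorb2 zip_append)
  then show ?thesis unfolding PP_def by simp
qed

lemma Phi_mul: "Phi s M (ncmul p q) = ncmul (Phi s M p) (Phi s M q)"
proof (rule ext)
  fix u :: "nat list"
  define n where "n = length u"
  have "Phi s M (ncmul p q) u = (\<Sum>w\<in>Wd s n. \<Sum>i\<le>n. p (take i w) * q (drop i w) * PP M w u)"
    unfolding Phi_def ncmul_def n_def
    by (rule sum.cong) (auto simp: Wd_def sum_distrib_right)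
  also have "\<dots> = (\<Sum>i\<le>n. \<Sum>w\<in>Wd s n. p (take i w) * q (drop i w) * PP M w u)"
    by (rule sum.swap)
  also have "\<dots> = (\<Sum>i\<le>n. Phi s M p (take i u) * Phi s M q (drop i u))"
  proof (rule sum.cong[OF refl])
    fix i assume i: "i \<in> {..n}"
    then have iu: "i \<le> length u" by (simp add: n_def)
    have "(\<Sum>w\<in>Wd s n. p (take i w) * q (drop i w) * PP M w u)
       = (\<Sum>(x,y)\<in>Wd s i \<times> Wd s (n-i). p (take i (x@y)) * q (drop i (x@y)) * PP M (x@y) u)"
      using i by (intro split_sum) auto
    also have "\<dots> = (\<Sum>(x,y)\<in>Wd s i \<times> Wd s (n-i). (p x * PP M x (take i u)) * (q y * PP M y (drop i u)))"
      by (rule sum.cong[OF refl]) (auto simp: Wd_def PP_append[OF _ iu])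
    also have "\<dots> = (\<Sum>x\<in>Wd s i. p x * PP M x (take i u)) * (\<Sum>y\<in>Wd s (n-i). q y * PP M y (drop i u))"
      by (simp add: sum_product sum.cartesian_product)
    also have "\<dots> = Phi s M p (take i u) * Phi s M q (drop i u)"
      unfolding Phi_def using iu by (simp add: n_def min_def)
    finally show "(\<Sum>w\<in>Wd s n. p (take i w) * q (drop i w) * PP M w u) = Phi s M p (take i u) * Phi s M q (drop i u)" .
  qed
  also have "\<dots> = ncmul (Phi s M p) (Phi s M q) u"
    unfolding ncmul_def n_def ..
  finally show "Phi s M (ncmul p q) u = ncmul (Phi s M p) (Phi s M q) u" .
qed

lemma sum_fun_apply: "(\<Sum>i\<in>A. f i) x = (\<Sum>i\<in>A. f i x)"
  by (induction A rule: infinite_finite_induct) auto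

lemma Phi_add: "Phi s M (f + g) = Phi s M f + Phi s M g"
  by (auto simp: Phi_def fun_eq_iff sum.distrib algebra_simps)
lemma Phi_diff: "Phi s M (f - g) = Phi s M f - Phi s M g"
  by (auto simp: Phi_def fun_eq_iff sum_subtractf algebra_simps)
lemma Phi_scale: "Phi s M (cscale c f) = cscale c (Phi s M f)"
  by (auto simp: Phi_def cscale_def fun_eq_iff sum_distrib_left algebra_simps)
lemma Phi_zero: "Phi s M 0 = 0"
  by (auto simp: Phi_def fun_eq_iff)
lemma Phi_sum: "Phi s M (\<Sum>i\<in>A. f i) = (\<Sum>i\<in>A. Phi s M (f i))"
  by (auto simp: Phi_def fun_eq_iff sum_fun_apply sum_distrib_right intro: sum.swap)
lemma Phi_comm: "Phi s M (nccomm f g) = nccomm (Phi s M f) (Phi s M g)"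
  by (simp add: nccomm_def Phi_diff Phi_mul)

lemma Phi_mono1: "i \<le> s \<Longrightarrow> Phi s M (ncmono [i]) = (\<lambda>u. if length u = 1 then M i (hd u) else 0)"
proof (rule ext)
  fix u assume i: "i \<le> s"
  show "Phi s M (ncmono [i]) u = (if length u = 1 then M i (hd u) else 0)"
  proof (cases "length u = 1")
    case True
    then obtain c where u: "u = [c]" by (cases u) auto
    have "Phi s M (ncmono [i]) u = (\<Sum>w\<in>Wd s 1. (if w = [i] then 1 else 0) * PP M w u)"
      by (simp add: Phi_def ncmono_def u)
    also have "\<dots> = (\<Sum>w\<in>Wd s 1. if w = [i] then PP M w u else 0)"
      by (rule sum.cong) auto
    also have "\<dots> = PP M [i] u" using i by (subst sum.delta[OF finite_Wd]) (simp add: Wd_def)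
    finally show ?thesis by (simp add: u PP_def)
  next
    case False
    then have "Phi s M (ncmono [i]) u = (\<Sum>w\<in>Wd s (length u). 0)"
      unfolding Phi_def ncmono_def by (intro sum.cong) (auto simp: Wd_def)
    then show ?thesis using False by simp
  qed
qed

definition sl :: "(nat \<Rightarrow> complex) \<Rightarrow> ncpoly" where
  "sl h = (\<lambda>u. if length u = 1 then h (hd u) else 0)"

lemma Phi_mono_sl: "i \<le> s \<Longrightarrow> Phi s M (ncmono [i]) = sl (M i)"
  by (simp add: Phi_mono1 sl_def)

lemma sl_simps[simp]: "sl h [] = 0" "sl h [x] = h x" "sl h (x#y#r) = 0"
  by (auto simp: sl_def)

lemma ncmul_sl_left: "ncmul (sl h) X u = (case u of [] \<Rightarrow> 0 | c#w \<Rightarrow> h c * X w)"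
proof (cases u)
  case Nil then show ?thesis by (simp add: ncmul_def sl_def)
next
  case (Cons c w)
  have "ncmul (sl h) X u = (\<Sum>i\<le>length u. if i = 1 then h c * X w else 0)"
    unfolding ncmul_def
  proof (rule sum.cong[OF refl])
    fix i assume "i \<in> {..length u}"
    then show "sl h (take i u) * X (drop i u) = (if i = 1 then h c * X w else 0)"
      using Cons by (cases i) (auto simp: sl_def)
  qed
  also have "\<dots> = h c * X w" using Cons by (auto simp: Suc_le_eq)
  finally show ?thesis using Cons by simp
qed

lemma ncmul_sl_right: "ncmul X (sl h) u = (if u = [] then 0 else X (butlast u) * h (last u))"
proof (cases u rule: rev_cases)
  case Nil then show ?thesis by (simp add: ncmul_def sl_def)
next
  case (snoc w c)
  have "ncmul X (sl h) u = (\<Sum>i\<le>length u. if i = length w then X w * h c else 0)"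
    unfolding ncmul_def
  proof (rule sum.cong[OF refl])
    fix i assume "i \<in> {..length u}"
    then have "i \<le> Suc (length w)" using snoc by simp
    then consider "i < length w" | "i = length w" | "i = Suc (length w)" by linarith
    then show "X (take i u) * sl h (drop i u) = (if i = length w then X w * h c else 0)"
      by cases (auto simp: sl_def snoc)
  qed
  also have "\<dots> = X w * h c" using snoc by simp
  finally show ?thesis using snoc by simp
qed

lemma triple_eval:
  "nccomm (sl A) (nccomm (sl B) (sl C)) u =
    (if length u = 3 then A (u!0) * (B (u!1) * C (u!2) - C (u!1) * B (u!2))
        - (B (u!0) * C (u!1) - C (u!0) * B (u!1)) * A (u!2) else 0)"
proof -
  have d: "(f - g) x = f x - g x" for f g :: ncpoly and x by simp
  consider "u = []" | x where "u=[x]" | x y where "u=[x,y]" | x y z where "u=[x,y,z]"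
    | x y z w r where "u = x#y#z#w#r" by (metis list.exhaust)
  then show ?thesis
    by cases (simp_all add: d nccomm_def ncmul_sl_left ncmul_sl_right)
qed

definition good :: "nat list \<Rightarrow> bool" where
  "good u = (\<forall>i j. i < j \<longrightarrow> j \<le> i+2 \<longrightarrow> j < length u \<longrightarrow> u!i \<noteq> 0 \<or> u!j \<noteq> 0)"

lemma good_take: "good u \<Longrightarrow> good (take k u)"
  unfolding good_def by auto

lemma good_drop: "good u \<Longrightarrow> good (drop k u)"
  unfolding good_def
proof (intro allI impI)
  fix i j assume g: "\<forall>i j. i < j \<longrightarrow> j \<le> i + 2 \<longrightarrow> j < length u \<longrightarrow> u ! i \<noteq> 0 \<or> u ! j \<noteq> 0"
    and "i < j" "j \<le> i + 2" "j < length (drop k u)"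
  then show "drop k u ! i \<noteq> 0 \<or> drop k u ! j \<noteq> 0"
    using g[rule_format, of "k+i" "k+j"] by auto
qed

definition vanish :: "ncpoly \<Rightarrow> bool" where
  "vanish F = (\<forall>u. good u \<longrightarrow> F u = 0)"

lemma vanish_mul_left: "vanish R \<Longrightarrow> vanish (ncmul P R)"
  unfolding vanish_def ncmul_def by (auto simp: good_drop)

lemma vanish_mul_right: "vanish R \<Longrightarrow> vanish (ncmul R Q)"
  unfolding vanish_def ncmul_def by (auto simp: good_take)

lemma Phi_rel:
  fixes a b :: "nat \<Rightarrow> complex" and ginv :: "nat \<Rightarrow> nat \<Rightarrow> real"
  assumes nu: "\<nu> \<le> s"
    and hS: "\<And>p q. \<not> (p = 0 \<and> q = 0) \<Longrightarrow>
      (\<Sum>la\<le>s. \<Sum>\<mu>\<le>s. complex_of_real (ginv la \<mu>) * MM a b la p * MM a b \<mu> q) = 0"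
  shows "vanish (Phi s (MM a b) (ym_rel s ginv \<nu>))"
proof -
  let ?M = "MM a b"
  let ?G = "\<lambda>la \<mu>. complex_of_real (ginv la \<mu>)"
  define S where "S p q = (\<Sum>la\<le>s. \<Sum>\<mu>\<le>s. ?G la \<mu> * ?M la p * ?M \<mu> q)" for p q
  have e: "Phi s ?M (ym_rel s ginv \<nu>) = (\<Sum>la\<le>s. \<Sum>\<mu>\<le>s. cscale (?G la \<mu>)
      (nccomm (sl (?M la)) (nccomm (sl (?M \<mu>)) (sl (?M \<nu>)))))"
    unfolding ym_rel_def Phi_sum Phi_scale Phi_comm
    using nu by (intro sum.cong refl) (auto simp: Phi_mono_sl)
  show ?thesis unfolding vanish_def
  proof (intro allI impI)
    fix u assume g: "good u"
    have "Phi s ?M (ym_rel s ginv \<nu>) u = (\<Sum>la\<le>s. \<Sum>\<mu>\<le>s. ?G la \<mu> *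
        (if length u = 3 then ?M la (u!0) * (?M \<mu> (u!1) * ?M \<nu> (u!2) - ?M \<nu> (u!1) * ?M \<mu> (u!2))
        - (?M \<mu> (u!0) * ?M \<nu> (u!1) - ?M \<nu> (u!0) * ?M \<mu> (u!1)) * ?M la (u!2) else 0))"
      unfolding e sum_fun_apply cscale_def triple_eval ..
    also have "\<dots> = 0"
    proof (cases "length u = 3")
      case False then show ?thesis by simp
    next
      case True
      have "\<exists>x y z. u = [x,y,z]" using True by (auto simp: numeral_3_eq_3 length_Suc_conv)
      then obtain x y z where u: "u = [x,y,z]" by blast
      have h1: "x \<noteq> 0 \<or> y \<noteq> 0" using g[unfolded good_def, rule_format, of 0 1] u by auto
      have h2: "x \<noteq> 0 \<or> z \<noteq> 0" using g[unfolded good_def, rule_format, of 0 2] u by auto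
      have h3: "y \<noteq> 0 \<or> z \<noteq> 0" using g[unfolded good_def, rule_format, of 1 2] u by auto
      have "(\<Sum>la\<le>s. \<Sum>\<mu>\<le>s. ?G la \<mu> *
          (?M la x * (?M \<mu> y * ?M \<nu> z - ?M \<nu> y * ?M \<mu> z)
          - (?M \<mu> x * ?M \<nu> y - ?M \<nu> x * ?M \<mu> y) * ?M la z))
        = (\<Sum>la\<le>s. \<Sum>\<mu>\<le>s. ?M \<nu> z * (?G la \<mu> * ?M la x * ?M \<mu> y)
            - ?M \<nu> y * (?G la \<mu> * ?M la x * ?M \<mu> z)
            - ?M \<nu> y * (?G la \<mu> * ?M la z * ?M \<mu> x)
            + ?M \<nu> x * (?G la \<mu> * ?M la z * ?M \<mu> y))"
        by (intro sum.cong refl) (simp add: right_diff_distrib left_diff_distrib distrib_left mult_ac)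
      also have "\<dots> = ?M \<nu> z * S x y - ?M \<nu> y * S x z - ?M \<nu> y * S z x + ?M \<nu> x * S z y"
        unfolding S_def by (simp only: sum.distrib sum_subtractf sum_distrib_left)
      also have "\<dots> = 0"
      proof -
        have S0: "S p q = 0" if "\<not> (p = 0 \<and> q = 0)" for p q
          unfolding S_def by (rule hS[OF that])
        show ?thesis using h1 h2 h3 S0[of x y] S0[of x z] S0[of z x] S0[of z y] by auto
      qed
      finally show ?thesis using True u by simp
    qed
    finally show "Phi s ?M (ym_rel s ginv \<nu>) u = 0" .
  qed
qed

lemma ideal_vanish:
  fixes a b :: "nat \<Rightarrow> complex"
  assumes hS: "\<And>p q. \<not> (p = 0 \<and> q = 0) \<Longrightarrow>
      (\<Sum>la\<le>s. \<Sum>\<mu>\<le>s. complex_of_real (ginv la \<mu>) * MM a b la p * MM a b \<mu> q) = 0"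
    and f: "f \<in> ym_ideal s ginv"
  shows "vanish (Phi s (MM a b) f)"
  using f unfolding ym_ideal_def
proof (induction rule: V.span_induct_alt)
  case base
  then show ?case by (simp add: Phi_def vanish_def)
next
  case (step c x y)
  then obtain p q \<nu> where x: "x = ncmul (ncmul p (ym_rel s ginv \<nu>)) q" and nu: "\<nu> \<le> s" by blast
  have "vanish (Phi s (MM a b) x)"
    unfolding x Phi_mul
    by (intro vanish_mul_right vanish_mul_left Phi_rel[OF nu hS]) auto
  have e: "Phi s (MM a b) (cscale c x + y) = cscale c (Phi s (MM a b) x) + Phi s (MM a b) y"
    by (simp only: Phi_add Phi_scale)
  show ?case using step.IH \<open>vanish (Phi s (MM a b) x)\<close>
    unfolding e vanish_def by (simp add: cscale_def)
qed

lemma Wd_Suc: "Wd s (Suc n) = (\<lambda>(i,w). i#w) ` ({0..s} \<times> Wd s n)"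
  by (auto simp: Wd_def length_Suc_conv image_iff)

lemma sum_prod_Wd:
  fixes H :: "nat \<Rightarrow> 'c \<Rightarrow> complex"
  shows "(\<Sum>w\<in>Wd s (length u). prod_list (map2 H w u)) = prod_list (map (\<lambda>c. \<Sum>i\<le>s. H i c) u)"
proof (induction u)
  case Nil
  have "Wd s 0 = {[]}" by (auto simp: Wd_def)
  then show ?case by simp
next
  case (Cons c u)
  have "(\<Sum>w\<in>Wd s (length (c#u)). prod_list (map2 H w (c#u)))
      = (\<Sum>(i,w)\<in>{0..s} \<times> Wd s (length u). prod_list (map2 H (i#w) (c#u)))"
    by (rule sum.reindex_bij_witness[where i="\<lambda>(i,w). i#w" and j="\<lambda>w. (hd w, tl w)"])
       (auto simp: Wd_def length_Suc_conv)
  also have "\<dots> = (\<Sum>i\<in>{0..s}. \<Sum>w\<in>Wd s (length u). H i c * prod_list (map2 H w u))"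
    by (simp add: sum.cartesian_product)
  also have "\<dots> = (\<Sum>i\<le>s. H i c) * (\<Sum>w\<in>Wd s (length u). prod_list (map2 H w u))"
    unfolding atLeast0AtMost by (rule sum_product[symmetric])
  finally show ?case using Cons.IH by simp
qed

lemma prod_merge:
  fixes F :: "nat \<Rightarrow> 'c \<Rightarrow> complex" and G :: "nat \<Rightarrow> 'd \<Rightarrow> complex"
  shows "length w = length u \<Longrightarrow> length w = length u' \<Longrightarrow>
   prod_list (map2 F w u) * prod_list (map2 G w u') =
   prod_list (map2 (\<lambda>i (c,c'). F i c * G i c') w (zip u u'))"
proof (induction w arbitrary: u u')
  case Nil then show ?case by simp
next
  case (Cons i w)
  then obtain c u1 c' u1' where "u = c#u1" "u' = c'#u1'"
    by (metis length_Suc_conv)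
  moreover have IH': "prod_list (map2 F w u1) * prod_list (map2 G w u1') =
   prod_list (map2 (\<lambda>i (c,c'). F i c * G i c') w (zip u1 u1'))"
    using Cons calculation by (intro Cons.IH) auto
  ultimately show ?case by (simp flip: IH' add: algebra_simps)
qed

lemma delta_prod:
  "length u = length u' \<Longrightarrow>
   prod_list (map (\<lambda>(c,c'). if c = c' then 1 else 0) (zip u u')) = (if u = u' then 1 else (0::complex))"
proof (induction u arbitrary: u')
  case Nil then show ?case by simp
next
  case (Cons c u)
  then obtain c' u1 where "u' = c'#u1" by (metis length_Suc_conv)
  then show ?case using Cons by auto
qed

definition fu :: "nat \<Rightarrow> (nat \<Rightarrow> nat \<Rightarrow> complex) \<Rightarrow> nat list \<Rightarrow> ncpoly" where
  "fu s D u = (\<lambda>w. if w \<in> Wd s (length u) then prod_list (map2 D w u) else 0)"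

lemma fu_deg: "set u \<subseteq> {0,1} \<Longrightarrow> fu s D u \<in> free_deg s (length u)"
  by (auto simp: fu_def free_deg_def Wd_def split: if_splits)

lemma Phi_fu:
  fixes a b \<alpha> \<beta> :: "nat \<Rightarrow> complex"
  assumes d1: "(\<Sum>i\<le>s. \<alpha> i * a i) = 1" and d2: "(\<Sum>i\<le>s. \<alpha> i * b i) = 0"
    and d3: "(\<Sum>i\<le>s. \<beta> i * a i) = 0" and d4: "(\<Sum>i\<le>s. \<beta> i * b i) = 1"
    and u: "set u \<subseteq> {0,1}" and u': "set u' \<subseteq> {0,1}" and len: "length u' = length u"
  shows "Phi s (MM a b) (fu s (\<lambda>i c. if c = 0 then \<alpha> i else \<beta> i) u) u' = (if u = u' then 1 else 0)"
proof -
  let ?D = "\<lambda>i c. if c = 0 then \<alpha> i else \<beta> i"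
  let ?H = "\<lambda>i (c,c'). ?D i c * MM a b i c'"
  have "Phi s (MM a b) (fu s ?D u) u' = (\<Sum>w\<in>Wd s (length (zip u u')). prod_list (map2 ?H w (zip u u')))"
    unfolding Phi_def fu_def PP_def
  proof (rule sum.cong)
    show "Wd s (length u') = Wd s (length (zip u u'))" using len by simp
  next
    fix w assume w: "w \<in> Wd s (length (zip u u'))"
    then have lw: "length w = length u" "length w = length u'" using len by (auto simp: Wd_def)
    have wu: "w \<in> Wd s (length u)" using w len by simp
    show "(if w \<in> Wd s (length u) then prod_list (map2 ?D w u) else 0) * prod_list (map2 (MM a b) w u')
        = prod_list (map2 ?H w (zip u u'))"
      by (simp only: if_P[OF wu] prod_merge[OF lw])
  qed
  also have "\<dots> = prod_list (map (\<lambda>cc. \<Sum>i\<le>s. ?H i cc) (zip u u'))"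
    by (rule sum_prod_Wd)
  also have "\<dots> = prod_list (map (\<lambda>(c,c'). if c = c' then 1 else 0) (zip u u'))"
  proof (rule arg_cong[where f=prod_list], rule map_cong[OF refl])
    fix cc assume "cc \<in> set (zip u u')"
    obtain c c' where cc: "cc = (c,c')" by (cases cc)
    have c: "c = 0 \<or> c = 1" using \<open>cc \<in> set (zip u u')\<close> cc u by (auto dest: set_zip_leftD)
    have c': "c' = 0 \<or> c' = 1" using \<open>cc \<in> set (zip u u')\<close> cc u' by (auto dest: set_zip_rightD)
    show "(\<Sum>i\<le>s. ?H i cc) = (case cc of (c,c') \<Rightarrow> if c = c' then 1 else 0)"
      using c c' by (elim disjE) (simp_all add: cc MM_def d1 d2 d3 d4)
  qed
  also have "\<dots> = (if u = u' then 1 else 0)" using len by (simp add: delta_prod)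
  finally show ?thesis .
qed


definition v3 :: "complex \<Rightarrow> complex \<Rightarrow> complex \<Rightarrow> nat \<Rightarrow> complex" where
  "v3 x y z = (\<lambda>i. if i = 0 then x else if i = 1 then y else if i = 2 then z else 0)"

lemma sum3:
  assumes "2 \<le> s"
  shows "(\<Sum>i\<le>s. v3 x y z i * f i) = x * f 0 + y * f 1 + z * f 2"
proof -
  have "(\<Sum>i\<le>s. v3 x y z i * f i) = (\<Sum>i\<in>{0,1,2}. v3 x y z i * f i)"
    using assms by (intro sum.mono_neutral_right) (auto simp: v3_def)
  then show ?thesis by (simp add: v3_def)
qed

lemma dsum3:
  assumes s: "2 \<le> s"
  shows "(\<Sum>la\<le>s. \<Sum>\<mu>\<le>s. G la \<mu> * v3 x y z la * v3 x' y' z' \<mu>) =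
    x * (x' * G 0 0 + y' * G 0 1 + z' * G 0 2) + y * (x' * G 1 0 + y' * G 1 1 + z' * G 1 2)
    + z * (x' * G 2 0 + y' * G 2 1 + z' * G 2 2)"
proof -
  have "(\<Sum>la\<le>s. \<Sum>\<mu>\<le>s. G la \<mu> * v3 x y z la * v3 x' y' z' \<mu>)
     = (\<Sum>la\<le>s. v3 x y z la * (\<Sum>\<mu>\<le>s. v3 x' y' z' \<mu> * G la \<mu>))"
    by (simp add: sum_distrib_left mult_ac)
  also have "\<dots> = (\<Sum>la\<le>s. v3 x y z la * (x' * G la 0 + y' * G la 1 + z' * G la 2))"
    by (simp add: sum3[OF s])
  also have "\<dots> = x * (x' * G 0 0 + y' * G 0 1 + z' * G 0 2) + y * (x' * G 1 0 + y' * G 1 1 + z' * G 1 2)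
    + z * (x' * G 2 0 + y' * G 2 1 + z' * G 2 2)"
    by (rule sum3[OF s])
  finally show ?thesis .
qed

lemma exists_ab:
  fixes G :: "nat \<Rightarrow> nat \<Rightarrow> complex"
  assumes s: "2 \<le> s" and sym: "\<And>i j. i \<le> s \<Longrightarrow> j \<le> s \<Longrightarrow> G i j = G j i"
  shows "\<exists>a b \<alpha> \<beta>. (\<Sum>la\<le>s. \<Sum>\<mu>\<le>s. G la \<mu> * b la * b \<mu>) = 0
    \<and> (\<Sum>la\<le>s. \<Sum>\<mu>\<le>s. G la \<mu> * a la * b \<mu>) = 0
    \<and> (\<Sum>la\<le>s. \<Sum>\<mu>\<le>s. G la \<mu> * b la * a \<mu>) = 0
    \<and> (\<Sum>i\<le>s. \<alpha> i * a i) = 1 \<and> (\<Sum>i\<le>s. \<alpha> i * b i) = 0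
    \<and> (\<Sum>i\<le>s. \<beta> i * a i) = 0 \<and> (\<Sum>i\<le>s. \<beta> i * b i) = 1"
proof -
  have g10: "G 1 0 = G 0 1" and g20: "G 2 0 = G 0 2" and g21: "G 2 1 = G 1 2"
    using sym s by auto
  have g10': "G (Suc 0) 0 = G 0 (Suc 0)" and g21': "G 2 (Suc 0) = G (Suc 0) 2" using g10 g21 by simp_all
  have S3: "(\<Sum>i\<le>s. v3 x y z i * v3 x' y' z' i) = x * x' + y * y' + z * z'" for x y z x' y' z'
    by (subst sum3[OF s]) (simp add: v3_def)
  show ?thesis
  proof (cases "G 0 0 = 0")
    case A: True
    show ?thesis
    proof (cases "G 0 1 = 0")
      case True
      have t1: "G 0 (Suc 0) = 0" "G (Suc 0) 0 = 0" using True g10 by simp_all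
      show ?thesis
        by (rule exI[of _ "v3 0 1 0"], rule exI[of _ "v3 1 0 0"], rule exI[of _ "v3 0 1 0"],
            rule exI[of _ "v3 1 0 0"]) (simp add: dsum3[OF s] S3 A t1)
    next
      case False
      show ?thesis
        by (rule exI[of _ "v3 0 (- G 0 2) (G 0 1)"], rule exI[of _ "v3 1 0 0"],
            rule exI[of _ "v3 0 0 (1 / G 0 1)"], rule exI[of _ "v3 1 0 0"])
           (simp only: dsum3[OF s] S3, use False in \<open>simp add: A g10 g10' g20 algebra_simps\<close>)
    qed
  next
    case B: False
    define D where "D = (G 0 1)^2 - G 0 0 * G 1 1"
    define r where "r = csqrt D"
    define t where "t = (- G 0 1 + r) / G 0 0"
    have r2: "r^2 = D" by (simp add: r_def)
    have Gt: "G 0 0 * t = r - G 0 1" using B by (simp add: t_def)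
    have "G 0 0 * (G 0 0 * t^2 + 2 * G 0 1 * t + G 1 1) = (G 0 0 * t)^2 + 2 * G 0 1 * (G 0 0 * t) + G 0 0 * G 1 1"
      by (simp add: algebra_simps power2_eq_square)
    also have "\<dots> = (r - G 0 1)^2 + 2 * G 0 1 * (r - G 0 1) + G 0 0 * G 1 1" by (simp only: Gt)
    also have "\<dots> = r^2 - (G 0 1)^2 + G 0 0 * G 1 1" by (simp add: algebra_simps power2_eq_square)
    also have "\<dots> = 0" by (simp add: r2 D_def)
    finally have ht: "G 0 0 * t^2 + 2 * G 0 1 * t + G 1 1 = 0" using B by simp
    have qb: "(\<Sum>la\<le>s. \<Sum>\<mu>\<le>s. G la \<mu> * v3 t 1 0 la * v3 t 1 0 \<mu>) = 0"
    proof -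
      have "(\<Sum>la\<le>s. \<Sum>\<mu>\<le>s. G la \<mu> * v3 t 1 0 la * v3 t 1 0 \<mu>) = G 0 0 * t^2 + 2 * G 0 1 * t + G 1 1"
        by (simp only: dsum3[OF s], simp add: g10 g10' algebra_simps power2_eq_square)
      then show ?thesis using ht by simp
    qed
    define c0 where "c0 = G 0 0 * t + G 0 1"
    define c2 where "c2 = G 0 2 * t + G 1 2"
    show ?thesis
    proof (cases "c0 = 0")
      case False
      show ?thesis
        by (rule exI[of _ "v3 (- c2) 0 c0"], rule exI[of _ "v3 t 1 0"],
            rule exI[of _ "v3 0 0 (1 / c0)"], rule exI[of _ "v3 0 1 0"])
           (simp only: qb dsum3[OF s] S3, use False in \<open>simp add: g10 g20 g21 g10' g21' c0_def c2_def algebra_simps\<close>)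
    next
      case True
      show ?thesis
        by (rule exI[of _ "v3 1 0 0"], rule exI[of _ "v3 t 1 0"],
            rule exI[of _ "v3 1 (- t) 0"], rule exI[of _ "v3 0 1 0"])
           (simp only: qb dsum3[OF s] S3, use True in \<open>simp add: g10 g20 g21 g10' g21' c0_def algebra_simps\<close>)
    qed
  qed
qed

lemma ginv_sym:
  fixes g ginv :: "nat \<Rightarrow> nat \<Rightarrow> real"
  assumes symg: "\<And>\<mu> \<nu>. \<mu> \<le> s \<Longrightarrow> \<nu> \<le> s \<Longrightarrow> g \<mu> \<nu> = g \<nu> \<mu>"
    and inv1: "\<And>la \<nu>. la \<le> s \<Longrightarrow> \<nu> \<le> s \<Longrightarrow>
           (\<Sum>\<mu>\<le>s. g la \<mu> * ginv \<mu> \<nu>) = (if la = \<nu> then 1 else 0)"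
    and la: "la \<le> s" and nu: "\<nu> \<le> s"
  shows "ginv la \<nu> = ginv \<nu> la"
proof -
  have L: "(\<Sum>\<mu>\<le>s. ginv \<mu> la * g \<mu> \<kappa>) = (if la = \<kappa> then 1 else 0)" if k: "\<kappa> \<le> s" for \<kappa>
  proof -
    have "(\<Sum>\<mu>\<le>s. ginv \<mu> la * g \<mu> \<kappa>) = (\<Sum>\<mu>\<le>s. g \<kappa> \<mu> * ginv \<mu> la)"
      using k by (intro sum.cong refl) (simp add: symg mult.commute)
    also have "\<dots> = (if \<kappa> = la then 1 else 0)" using inv1[OF k la] .
    finally show ?thesis by auto
  qed
  define X where "X = (\<Sum>\<mu>\<le>s. \<Sum>\<kappa>\<le>s. ginv \<mu> la * g \<mu> \<kappa> * ginv \<kappa> \<nu>)"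
  have "X = (\<Sum>\<mu>\<le>s. ginv \<mu> la * (\<Sum>\<kappa>\<le>s. g \<mu> \<kappa> * ginv \<kappa> \<nu>))"
    by (simp add: X_def sum_distrib_left mult.assoc)
  also have "\<dots> = (\<Sum>\<mu>\<le>s. if \<mu> = \<nu> then ginv \<mu> la else 0)"
    by (intro sum.cong refl) (simp add: inv1 nu)
  also have "\<dots> = ginv \<nu> la" using nu by simp
  finally have X1: "X = ginv \<nu> la" .
  have "X = (\<Sum>\<kappa>\<le>s. (\<Sum>\<mu>\<le>s. ginv \<mu> la * g \<mu> \<kappa>) * ginv \<kappa> \<nu>)"
    unfolding X_def by (subst sum.swap) (simp add: sum_distrib_right)
  also have "\<dots> = (\<Sum>\<kappa>\<le>s. if la = \<kappa> then ginv \<kappa> \<nu> else 0)"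
    by (intro sum.cong refl) (simp add: L)
  also have "\<dots> = ginv la \<nu>" using la by simp
  finally show ?thesis using X1 by simp
qed


definition blk :: "bool \<Rightarrow> nat list" where
  "blk b = [if b then 0 else 1, 1, 1]"

definition bw :: "bool list \<Rightarrow> nat \<Rightarrow> nat list" where
  "bw bs r = concat (map blk bs) @ replicate r 1"

lemma bw_Cons: "bw (b#bs) r = blk b @ bw bs r"
  by (simp add: bw_def)

lemma length_bw: "length (bw bs r) = 3 * length bs + r"
  by (induction bs) (auto simp: bw_def blk_def)

lemma set_bw: "set (bw bs r) \<subseteq> {0,1}"
  by (auto simp: bw_def blk_def)

lemma bw_zero: "i < length (bw bs r) \<Longrightarrow> bw bs r ! i = 0 \<Longrightarrow> i mod 3 = 0"
proof (induction bs arbitrary: i)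
  case Nil then show ?case by (simp add: bw_def)
next
  case (Cons b bs)
  show ?case
  proof (cases "i < 3")
    case True
    then have "i = 0 \<or> i = 1 \<or> i = 2" by auto
    then show ?thesis using Cons.prems by (auto simp: bw_Cons blk_def nth_append)
  next
    case False
    have "bw bs r ! (i - 3) = 0" "i - 3 < length (bw bs r)"
      using Cons.prems False by (auto simp: bw_Cons blk_def nth_append numeral_3_eq_3)
    then have "(i - 3) mod 3 = 0" by (rule Cons.IH[rotated])
    then show ?thesis using False by presburger
  qed
qed

lemma good_bw: "good (bw bs r)"
  unfolding good_def
proof (intro allI impI)
  fix i j assume "i < j" "j \<le> i + 2" "j < length (bw bs r)"
  show "bw bs r ! i \<noteq> 0 \<or> bw bs r ! j \<noteq> 0"
  proof (rule ccontr)
    assume "\<not> ?thesis"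
    then have "i mod 3 = 0" "j mod 3 = 0"
      using bw_zero[of i bs r] bw_zero[of j bs r] \<open>i < j\<close> \<open>j < length (bw bs r)\<close> by auto
    then show False using \<open>i < j\<close> \<open>j \<le> i + 2\<close> by presburger
  qed
qed

lemma bw_inj: "length bs = length bs' \<Longrightarrow> bw bs r = bw bs' r \<Longrightarrow> bs = bs'"
proof (induction bs arbitrary: bs')
  case Nil then show ?case by simp
next
  case (Cons b bs)
  then obtain b' bs'' where bs': "bs' = b' # bs''" by (cases bs') auto
  have "blk b @ bw bs r = blk b' @ bw bs'' r" using Cons.prems bs' by (simp add: bw_Cons)
  then have "blk b = blk b'" "bw bs r = bw bs'' r"
    by (simp_all add: blk_def)
  then have "b = b'" "bs = bs''" using Cons.IH Cons.prems bs' by (auto simp: blk_def split: if_splits)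
  then show ?case using bs' by simp
qed

lemma card_bool_lists: "card {bs :: bool list. length bs = k} = 2 ^ k"
  using card_lists_length_eq[of "UNIV :: bool set" k] by simp

lemma free_deg_span: "free_deg s n \<subseteq> V.span (ncmono ` Wd s n)"
proof
  fix f assume f: "f \<in> free_deg s n"
  have "f = (\<Sum>w\<in>Wd s n. cscale (f w) (ncmono w))"
  proof (rule ext)
    fix x
    have "(\<Sum>w\<in>Wd s n. cscale (f w) (ncmono w)) x = (\<Sum>w\<in>Wd s n. if x = w then f x else 0)"
      unfolding sum_fun_apply cscale_def ncmono_def by (intro sum.cong refl) auto
    also have "\<dots> = f x"
      using f by (subst sum.delta'[OF finite_Wd]) (auto simp: free_deg_def Wd_def)
    finally show "f x = (\<Sum>w\<in>Wd s n. cscale (f w) (ncmono w)) x" by simp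
  qed
  also have "\<dots> \<in> V.span (ncmono ` Wd s n)"
    by (intro V.span_sum V.span_scale V.span_base) auto
  finally show "f \<in> V.span (ncmono ` Wd s n)" .
qed


lemma main_count:
  fixes ginv :: "nat \<Rightarrow> nat \<Rightarrow> real" and a b \<alpha> \<beta> :: "nat \<Rightarrow> complex"
  assumes hS: "\<And>p q. \<not> (p = 0 \<and> q = 0) \<Longrightarrow>
      (\<Sum>la\<le>s. \<Sum>\<mu>\<le>s. complex_of_real (ginv la \<mu>) * MM a b la p * MM a b \<mu> q) = 0"
    and d1: "(\<Sum>i\<le>s. \<alpha> i * a i) = 1" and d2: "(\<Sum>i\<le>s. \<alpha> i * b i) = 0"
    and d3: "(\<Sum>i\<le>s. \<beta> i * a i) = 0" and d4: "(\<Sum>i\<le>s. \<beta> i * b i) = 1"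
  shows "2 ^ (n div 3) \<le> ym_dim s ginv n"
proof -
  let ?M = "MM a b"
  define D where "D = (\<lambda>i (c::nat). if c = 0 then \<alpha> i else \<beta> i)"
  define k where "k = n div 3"
  define U where "U = (\<lambda>bs. bw bs (n mod 3)) ` {bs. length bs = k}"
  have U: "length u = n \<and> set u \<subseteq> {0,1} \<and> good u" if uU: "u \<in> U" for u
  proof -
    obtain bs where "u = bw bs (n mod 3)" "length bs = k" using uU by (auto simp: U_def)
    then show ?thesis using set_bw[of bs "n mod 3"] by (simp add: length_bw k_def good_bw)
  qed
  have injbw: "inj_on (\<lambda>bs. bw bs (n mod 3)) {bs. length bs = k}"
    by (rule inj_onI) (auto intro: bw_inj)
  have cardU: "card U = 2 ^ k"
    unfolding U_def by (simp add: card_image[OF injbw] card_bool_lists)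
  have finU: "finite U" using cardU by (intro card_ge_0_finite) simp
  have PhiE: "Phi s ?M (fu s D u) u' = (if u = u' then 1 else 0)" if "u \<in> U" "u' \<in> U" for u u'
    unfolding D_def using U[OF that(1)] U[OF that(2)] by (intro Phi_fu d1 d2 d3 d4) auto
  have injE: "inj_on (fu s D) U"
  proof (rule inj_onI)
    fix u u' assume uu: "u \<in> U" "u' \<in> U" "fu s D u = fu s D u'"
    have "Phi s ?M (fu s D u) u' = 1" using uu PhiE[of u' u'] by simp
    then show "u = u'" using PhiE[OF uu(1,2)] by (simp split: if_splits)
  qed
  define E where "E = fu s D ` U"
  have cardE: "card E = 2 ^ k" unfolding E_def using card_image[OF injE] cardU by simp
  have finE: "finite E" unfolding E_def using finU by simp
  let ?F = "free_deg s n"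
  let ?K = "ym_ideal s ginv \<inter> free_deg s n"
  obtain B where B: "B \<subseteq> ?K" "V.independent B" "?K \<subseteq> V.span B" "card B = V.dim ?K"
    by (rule V.basis_exists)
  obtain BF where BF: "BF \<subseteq> ?F" "V.independent BF" "?F \<subseteq> V.span BF" "card BF = V.dim ?F"
    by (rule V.basis_exists)
  have finBF: "finite BF"
    using V.independent_span_bound[OF finite_imageI[OF finite_Wd] BF(2)] BF(1) free_deg_span by blast
  have finB: "finite B"
    using V.independent_span_bound[OF finBF B(2)] B(1) BF(3) V.span_superset by blast
  have vanB: "Phi s ?M v u = 0" if "v \<in> B" "good u" for v u
    using ideal_vanish[OF hS, of v] that B(1) unfolding vanish_def by auto
  have EF: "E \<subseteq> ?F" unfolding E_def using U fu_deg by fastforce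
  have disj: "B \<inter> E = {}"
  proof (rule ccontr)
    assume "B \<inter> E \<noteq> {}"
    then obtain u where u: "u \<in> U" "fu s D u \<in> B" unfolding E_def by auto
    then show False using vanB[OF u(2)] U[OF u(1)] PhiE[OF u(1) u(1)] by simp
  qed
  have indep: "V.independent (B \<union> E)"
    unfolding V.independent_explicit_module
  proof (intro allI impI)
    fix t c v assume t: "finite t" "t \<subseteq> B \<union> E" and sum0: "(\<Sum>v\<in>t. cscale (c v) v) = 0" and v: "v \<in> t"
    have Ez: "c (fu s D u) = 0" if u: "u \<in> U" "fu s D u \<in> t" for u
    proof -
      have "0 = Phi s ?M (\<Sum>v\<in>t. cscale (c v) v) u" by (simp add: sum0 Phi_def)
      also have "\<dots> = (\<Sum>v\<in>t. c v * Phi s ?M v u)"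
        by (simp only: Phi_sum Phi_scale sum_fun_apply) (simp add: cscale_def)
      also have "\<dots> = (\<Sum>v\<in>t. if v = fu s D u then c v else 0)"
      proof (rule sum.cong[OF refl])
        fix w assume w: "w \<in> t"
        show "c w * Phi s ?M w u = (if w = fu s D u then c w else 0)"
        proof (cases "w \<in> B")
          case True
          then have "w \<noteq> fu s D u" using disj u(1) unfolding E_def by auto
          then show ?thesis using vanB[OF True] U[OF u(1)] by simp
        next
          case False
          then obtain u' where u': "u' \<in> U" "w = fu s D u'" using w t unfolding E_def by auto
          show ?thesis using PhiE[OF u'(1) u(1)] u' inj_onD[OF injE _ u'(1) u(1)] by auto
        qed
      qed
      also have "\<dots> = c (fu s D u)" using t u by simp
      finally show ?thesis by simp
    qed
    have z: "(\<Sum>v\<in>t - B. cscale (c v) v) = 0"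
    proof (rule sum.neutral, rule ballI)
      fix w assume "w \<in> t - B"
      then obtain u' where u': "u' \<in> U" "w = fu s D u'" "w \<in> t" using t unfolding E_def by auto
      then have "c w = 0" using Ez by simp
      then show "cscale (c w) w = 0" by (simp add: cscale_def fun_eq_iff)
    qed
    have "(\<Sum>v\<in>t \<inter> B. cscale (c v) v) = 0"
      using sum0 sum.Int_Diff[OF t(1), of "\<lambda>v. cscale (c v) v" B] z by simp
    then have cB: "c w = 0" if "w \<in> t \<inter> B" for w
      using V.independentD[OF B(2) _ _ _ that] t(1) by auto
    show "c v = 0"
    proof (cases "v \<in> B")
      case True then show ?thesis using cB v by auto
    next
      case False
      then obtain u' where u': "u' \<in> U" "v = fu s D u'" using v t unfolding E_def by auto
      then show ?thesis using Ez v by auto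
    qed
  qed
  have "B \<union> E \<subseteq> V.span BF" using B(1) EF BF(3) by blast
  then have "card (B \<union> E) \<le> card BF"
    using V.independent_span_bound[OF finBF indep] by blast
  moreover have "card (B \<union> E) = card B + 2 ^ k"
    using card_Un_disjoint[OF finB finE disj] cardE by simp
  ultimately show ?thesis
    unfolding ym_dim_def k_def[symmetric] using B(4) BF(4) by simp
qed


lemma growth_bound: "(1/2) * (2 powr (1/3)) ^ n \<le> real (2 ^ (n div 3) :: nat)"
proof -
  have "(2 powr (1/3)) ^ n = (2::real) powr (real n * (1/3))" by (simp add: powr_power)
  also have "\<dots> \<le> 2 powr (real (n div 3 + 1))"
    by (intro powr_mono) linarith+
  also have "\<dots> = 2 * 2 ^ (n div 3)" by (simp add: powr_add powr_realpow)
  finally show ?thesis by simp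
qed

theorem mainTheorem5:
  fixes s :: nat and g ginv :: "nat \<Rightarrow> nat \<Rightarrow> real"
  assumes "s \<ge> 2"
    and "\<And>\<mu> \<nu>. \<mu> \<le> s \<Longrightarrow> \<nu> \<le> s \<Longrightarrow> g \<mu> \<nu> = g \<nu> \<mu>"
    and "\<And>la \<nu>. la \<le> s \<Longrightarrow> \<nu> \<le> s \<Longrightarrow>
           (\<Sum>\<mu>\<le>s. g la \<mu> * ginv \<mu> \<nu>) = (if la = \<nu> then 1 else 0)"
    and "\<And>la \<nu>. la \<le> s \<Longrightarrow> \<nu> \<le> s \<Longrightarrow>
           (\<Sum>\<mu>\<le>s. ginv la \<mu> * g \<mu> \<nu>) = (if la = \<nu> then 1 else 0)"
  shows "\<exists>c > 1. \<exists>C > 0. \<forall>n. real (ym_dim s ginv n) \<ge> C * c ^ n"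
proof -
  let ?G = "\<lambda>i j. complex_of_real (ginv i j)"
  have symG: "?G i j = ?G j i" if "i \<le> s" "j \<le> s" for i j
    using ginv_sym[of s g ginv i j, OF assms(2) assms(3) that] by simp
  obtain a b \<alpha> \<beta> where
    h1: "(\<Sum>la\<le>s. \<Sum>\<mu>\<le>s. ?G la \<mu> * b la * b \<mu>) = 0"
    and h2: "(\<Sum>la\<le>s. \<Sum>\<mu>\<le>s. ?G la \<mu> * a la * b \<mu>) = 0"
    and h3: "(\<Sum>la\<le>s. \<Sum>\<mu>\<le>s. ?G la \<mu> * b la * a \<mu>) = 0"
    and d1: "(\<Sum>i\<le>s. \<alpha> i * a i) = 1" and d2: "(\<Sum>i\<le>s. \<alpha> i * b i) = 0"
    and d3: "(\<Sum>i\<le>s. \<beta> i * a i) = 0" and d4: "(\<Sum>i\<le>s. \<beta> i * b i) = 1"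
    using exists_ab[of s ?G, OF assms(1) symG] by blast
  have hS: "(\<Sum>la\<le>s. \<Sum>\<mu>\<le>s. ?G la \<mu> * MM a b la p * MM a b \<mu> q) = 0"
    if pq: "\<not> (p = 0 \<and> q = 0)" for p q
  proof (cases "p \<in> {0,1} \<and> q \<in> {0,1}")
    case True
    then consider "p = 0" "q = 1" | "p = 1" "q = 0" | "p = 1" "q = 1" using pq by auto
    then show ?thesis by cases (simp_all add: MM_def h1 h2 h3)
  next
    case False
    then have z: "MM a b la p * MM a b \<mu> q = 0" for la \<mu> by (auto simp: MM_def)
    show ?thesis by (intro sum.neutral ballI) (simp only: mult.assoc z mult_zero_right)
  qed
  have cnt: "2 ^ (n div 3) \<le> ym_dim s ginv n" for n
    by (rule main_count[OF hS d1 d2 d3 d4]) auto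
  show ?thesis
  proof (intro exI conjI allI)
    show "(1::real) < 2 powr (1/3)" by simp
    show "(0::real) < 1/2" by simp
    fix n
    show "1/2 * (2 powr (1/3)) ^ n \<le> real (ym_dim s ginv n)"
      using growth_bound[of n] cnt[of n] by (meson of_nat_le_iff order_trans)
  qed
qed

end
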